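(* Let $V$ be a finite dimensional normed vector space and $H\le O(V)$. Let $L_i:H\to\mathbb{R}$ be group-norms such that $d_i(u,v)=\inf_{a\in H}\sqrt{L_i(a)^2+\|au-v\|^2}$ converge uniformly on compact sets to a semi-metric $d_\infty$ on $V$. Then $$G=\{g\in O(V):\ d_\infty(u,gu)=0 \text{ for all } u\in V\}$$ is a closed subgroup of $O(V)$, and for $u,v\in V$, $d_\infty(u,v)=0$ if and only if $v=gu$ for some $g\in G$.
   Context: $O(V)$ is the group of norm-preserving linear maps of $V$. A group-norm on $H$ is $L:H\to\mathbb{R}$ with $L(a)\ge0$, $L(a)=0$ iff $a=e$, $L(a^{-1})=L(a)$, $L(ab)\le L(a)+L(b)$. $G$ is called the wane group. *)

theory Defs
  imports "HOL-Analysis.Analysis"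
begin

definition orth :: "('a::real_normed_vector \<Rightarrow> 'a) set" where
  "orth = {f. linear f \<and> (\<forall>x. norm (f x) = norm x)}"

definition subgroup_orth :: "('a::real_normed_vector \<Rightarrow> 'a) set \<Rightarrow> bool" where
  "subgroup_orth H \<longleftrightarrow> H \<subseteq> orth \<and> id \<in> H \<and>
     (\<forall>a\<in>H. \<forall>b\<in>H. a \<circ> b \<in> H) \<and> (\<forall>a\<in>H. inv a \<in> H)"

definition group_norm :: "('a \<Rightarrow> 'a) set \<Rightarrow> (('a \<Rightarrow> 'a) \<Rightarrow> real) \<Rightarrow> bool" where
  "group_norm H L \<longleftrightarrow>
     (\<forall>a\<in>H. L a \<ge> 0) \<and> (\<forall>a\<in>H. L a = 0 \<longleftrightarrow> a = id) \<and>
     (\<forall>a\<in>H. L (inv a) = L a) \<and> (\<forall>a\<in>H. \<forall>b\<in>H. L (a \<circ> b) \<le> L a + L b)"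

definition dist_L :: "('a::real_normed_vector \<Rightarrow> 'a) set \<Rightarrow> (('a \<Rightarrow> 'a) \<Rightarrow> real) \<Rightarrow> 'a \<Rightarrow> 'a \<Rightarrow> real" where
  "dist_L H L u v = (INF a\<in>H. sqrt ((L a)\<^sup>2 + (norm (a u - v))\<^sup>2))"

definition semi_metric :: "('a \<Rightarrow> 'a \<Rightarrow> real) \<Rightarrow> bool" where
  "semi_metric d \<longleftrightarrow> (\<forall>x y. d x y \<ge> 0) \<and> (\<forall>x. d x x = 0) \<and> (\<forall>x y. d x y = d y x) \<and>
     (\<forall>x y z. d x z \<le> d x y + d y z)"

end

theory Submission
  imports Defs
begin

lemma bw_span:
  fixes S :: "'a::real_normed_vector set"
  assumes "finite S"
  shows "\<forall>x::nat\<Rightarrow>'a. (\<forall>i. x i \<in> span S) \<longrightarrow> bounded (range x) \<longrightarrow>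
     (\<exists>l\<in>span S. \<exists>r. strict_mono r \<and> (x \<circ> r) \<longlonglongrightarrow> l)"
  using assms
proof (induction S rule: finite_induct)
  case empty
  show ?case
  proof (intro allI impI)
    fix x :: "nat \<Rightarrow> 'a" assume "\<forall>i. x i \<in> span {}"
    then have "x = (\<lambda>i. 0)" by auto
    then show "\<exists>l\<in>span {}. \<exists>r. strict_mono r \<and> (x \<circ> r) \<longlonglongrightarrow> l"
      by (auto intro!: bexI[of _ 0] exI[of _ id] simp: strict_mono_def o_def)
  qed
next
  case (insert a S)
  have clS: "closed (span S)"
    unfolding closed_sequential_limits
  proof (intro allI impI)
    fix x l assume H: "(\<forall>n. x n \<in> span S) \<and> x \<longlonglongrightarrow> l"
    then have "bounded (range x)" using convergent_imp_bounded by blast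
    with H insert.IH obtain l' r where "l' \<in> span S" "strict_mono r" "(x \<circ> r) \<longlonglongrightarrow> l'" by blast
    moreover have "(x \<circ> r) \<longlonglongrightarrow> l" using H LIMSEQ_subseq_LIMSEQ \<open>strict_mono r\<close> by blast
    ultimately show "l \<in> span S" using LIMSEQ_unique by metis
  qed
  show ?case
  proof (cases "a \<in> span S")
    case True
    then show ?thesis using insert.IH span_redundant by metis
  next
    case False
    define \<delta> where "\<delta> = infdist a (span S)"
    have dpos: "\<delta> > 0" unfolding \<delta>_def
      using infdist_pos_not_in_closed[OF clS _ False] span_zero by blast
    show ?thesis
    proof (intro allI impI)
      fix x :: "nat \<Rightarrow> 'a"
      assume xs: "\<forall>i. x i \<in> span (insert a S)" and bx: "bounded (range x)"
      from bx obtain M where M: "\<And>i. norm (x i) \<le> M" unfolding bounded_iff by blast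
      have "\<forall>i. \<exists>k. x i - k *\<^sub>R a \<in> span S" using xs span_insert[of a S] by auto
      then obtain c where c: "\<And>i. x i - c i *\<^sub>R a \<in> span S" by metis
      define y where "y i = x i - c i *\<^sub>R a" for i
      have ys: "y i \<in> span S" for i using c y_def by simp
      have cb: "\<bar>c i\<bar> * \<delta> \<le> M" for i
      proof (cases "c i = 0")
        case True
        have "0 \<le> M" using M[of i] norm_ge_zero[of "x i"] by linarith
        then show ?thesis using True by simp
      next
        case False
        have m: "- ((1 / c i) *\<^sub>R y i) \<in> span S" using ys by (simp add: span_neg span_scale)
        have "\<delta> \<le> dist a (- ((1 / c i) *\<^sub>R y i))" unfolding \<delta>_def by (rule infdist_le[OF m])
        also have "\<dots> = norm (a + (1 / c i) *\<^sub>R y i)" by (simp add: dist_norm)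
        finally have "\<bar>c i\<bar> * \<delta> \<le> \<bar>c i\<bar> * norm (a + (1 / c i) *\<^sub>R y i)"
          by (simp add: mult_left_mono)
        also have "\<dots> = norm (c i *\<^sub>R a + y i)"
        proof -
          have e: "c i *\<^sub>R (a + (1 / c i) *\<^sub>R y i) = c i *\<^sub>R a + y i"
            using False by (simp add: scaleR_add_right)
          show ?thesis by (metis e norm_scaleR)
        qed
        also have "\<dots> = norm (x i)" by (simp add: y_def)
        finally show ?thesis using M[of i] by linarith
      qed
      have "bounded (range c)" unfolding bounded_iff
        using cb dpos by (auto intro!: exI[of _ "M / \<delta>"] simp: field_simps)
      then obtain c0 r1 where r1: "strict_mono r1" "(c \<circ> r1) \<longlonglongrightarrow> c0"
        using bounded_imp_convergent_subsequence by blast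
      have "bounded (range (y \<circ> r1))" unfolding bounded_iff
      proof (intro exI allI ballI)
        fix z assume "z \<in> range (y \<circ> r1)"
        then obtain i where z: "z = y (r1 i)" by auto
        have "norm z \<le> norm (x (r1 i)) + norm (c (r1 i) *\<^sub>R a)" unfolding z y_def
          by (rule norm_triangle_ineq4)
        also have "\<dots> \<le> M + (M / \<delta>) * norm a"
        proof -
          have "\<bar>c (r1 i)\<bar> \<le> M / \<delta>" using cb[of "r1 i"] dpos by (simp add: field_simps)
          then have "norm (c (r1 i) *\<^sub>R a) \<le> (M / \<delta>) * norm a"
            unfolding norm_scaleR by (rule mult_right_mono) simp
          then show ?thesis using M[of "r1 i"] by linarith
        qed
        finally show "norm z \<le> M + (M / \<delta>) * norm a" .
      qed
      moreover have "\<forall>i. (y \<circ> r1) i \<in> span S" using ys by simp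
      ultimately obtain l r2 where l: "l \<in> span S" "strict_mono r2" "(y \<circ> r1 \<circ> r2) \<longlonglongrightarrow> l"
        using insert.IH by blast
      have cc: "(c \<circ> r1 \<circ> r2) \<longlonglongrightarrow> c0" using LIMSEQ_subseq_LIMSEQ[OF r1(2) l(2)] .
      have "(\<lambda>i. (y \<circ> r1 \<circ> r2) i + (c \<circ> r1 \<circ> r2) i *\<^sub>R a) \<longlonglongrightarrow> l + c0 *\<^sub>R a"
        by (intro tendsto_intros l cc)
      moreover have "(\<lambda>i. (y \<circ> r1 \<circ> r2) i + (c \<circ> r1 \<circ> r2) i *\<^sub>R a) = x \<circ> (r1 \<circ> r2)"
        by (auto simp: y_def)
      moreover have "l + c0 *\<^sub>R a \<in> span (insert a S)"
        using l(1) by (meson insertI1 span_add span_base span_mono span_scale subsetD subset_insertI)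
      ultimately have "(x \<circ> (r1 \<circ> r2)) \<longlonglongrightarrow> l + c0 *\<^sub>R a" "l + c0 *\<^sub>R a \<in> span (insert a S)"
        by simp_all
      then show "\<exists>l\<in>span (insert a S). \<exists>r. strict_mono r \<and> (x \<circ> r) \<longlonglongrightarrow> l"
        using strict_mono_o[OF r1(1) l(2)] by blast
    qed
  qed
qed


lemma multi_subseq:
  fixes f :: "nat \<Rightarrow> 'b \<Rightarrow> 'a::real_normed_vector"
  assumes fin: "finite B"
    and bw: "\<And>x::nat\<Rightarrow>'a. bounded (range x) \<Longrightarrow> \<exists>l r. strict_mono r \<and> (x \<circ> r) \<longlonglongrightarrow> l"
    and bd: "\<And>b. b \<in> B \<Longrightarrow> bounded (range (\<lambda>i. f i b))"
  shows "\<exists>r. strict_mono r \<and> (\<forall>b\<in>B. convergent (\<lambda>i. f (r i) b))"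
  using fin bd
proof (induction B rule: finite_induct)
  case empty show ?case by (auto intro!: exI[of _ id] simp: strict_mono_def)
next
  case (insert b B)
  obtain r where r: "strict_mono r" "\<forall>b\<in>B. convergent (\<lambda>i. f (r i) b)" using insert by auto
  have "bounded (range (\<lambda>i. f (r i) b))"
    using insert.prems[of b] by (rule bounded_subset) auto
  then obtain l r' where r': "strict_mono r'" "((\<lambda>i. f (r i) b) \<circ> r') \<longlonglongrightarrow> l" using bw by blast
  have "\<forall>b'\<in>insert b B. convergent (\<lambda>i. f ((r \<circ> r') i) b')"
  proof
    fix b' assume "b' \<in> insert b B"
    then show "convergent (\<lambda>i. f ((r \<circ> r') i) b')"
    proof
      assume "b' = b" then show ?thesis using r'(2) by (auto simp: convergent_def o_def)
    next
      assume "b' \<in> B"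
      then obtain l' where "(\<lambda>i. f (r i) b') \<longlonglongrightarrow> l'" using r(2) convergent_def by blast
      from LIMSEQ_subseq_LIMSEQ[OF this r'(1)] show ?thesis by (auto simp: convergent_def o_def)
    qed
  qed
  then show ?case using strict_mono_o[OF r(1) r'(1)] by blast
qed

lemma sqrt_lip:
  fixes l p q c :: real
  assumes "0 \<le> p" "p \<le> q + c" "0 \<le> c" "0 \<le> q"
  shows "sqrt (l\<^sup>2 + p\<^sup>2) \<le> sqrt (l\<^sup>2 + q\<^sup>2) + c"
proof -
  have "p\<^sup>2 \<le> (q + c)\<^sup>2" using assms by (intro power_mono) auto
  then have "sqrt (l\<^sup>2 + p\<^sup>2) \<le> sqrt (l\<^sup>2 + (q + c)\<^sup>2)" by simp
  also have "\<dots> \<le> sqrt (l\<^sup>2 + q\<^sup>2) + c"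
  proof (rule real_sqrt_le_iff[THEN iffD2, THEN order_trans])
    have s: "q \<le> sqrt (l\<^sup>2 + q\<^sup>2)" by (metis add.commute real_sqrt_sum_squares_ge1)
    have "l\<^sup>2 + (q + c)\<^sup>2 = (l\<^sup>2 + q\<^sup>2) + 2 * q * c + c\<^sup>2" by (simp add: power2_eq_square algebra_simps)
    also have "\<dots> \<le> (sqrt (l\<^sup>2 + q\<^sup>2))\<^sup>2 + 2 * sqrt (l\<^sup>2 + q\<^sup>2) * c + c\<^sup>2"
      using s assms by (simp add: mult_right_mono)
    also have "\<dots> = (sqrt (l\<^sup>2 + q\<^sup>2) + c)\<^sup>2" by (simp add: power2_eq_square algebra_simps)
    finally show "l\<^sup>2 + (q + c)\<^sup>2 \<le> (sqrt (l\<^sup>2 + q\<^sup>2) + c)\<^sup>2" .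
    show "sqrt ((sqrt (l\<^sup>2 + q\<^sup>2) + c)\<^sup>2) \<le> sqrt (l\<^sup>2 + q\<^sup>2) + c"
      using assms(3) by simp
  qed
  finally show ?thesis .
qed

context
  fixes H :: "('a::real_normed_vector \<Rightarrow> 'a) set" and L :: "('a \<Rightarrow> 'a) \<Rightarrow> real"
  assumes H: "subgroup_orth H" and L: "group_norm H L"
begin

lemma H_ne: "H \<noteq> {}" using H unfolding subgroup_orth_def by auto

lemma dL_bdd: "bdd_below ((\<lambda>a. sqrt ((L a)\<^sup>2 + (norm (a u - v))\<^sup>2)) ` H)"
  by (rule bdd_belowI[of _ 0]) auto

lemma dL_nonneg: "0 \<le> dist_L H L u v"
  unfolding dist_L_def using H_ne by (intro cINF_greatest) auto

lemma dL_le: "a \<in> H \<Longrightarrow> dist_L H L u v \<le> sqrt ((L a)\<^sup>2 + (norm (a u - v))\<^sup>2)"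
  unfolding dist_L_def by (rule cINF_lower[OF dL_bdd])

lemma dL_self: "a \<in> H \<Longrightarrow> dist_L H L w (a w) \<le> L a"
  using dL_le[of a w "a w"] L unfolding group_norm_def by auto

lemma dL_id: "dist_L H L y x \<le> norm (y - x)"
proof -
  have "id \<in> H" "L id = 0" using H L unfolding subgroup_orth_def group_norm_def by auto
  then show ?thesis using dL_le[of id y x] by simp
qed

lemma dL_lip: "dist_L H L w x \<le> dist_L H L w y + norm (x - y)"
proof -
  have "dist_L H L w x - norm (x - y) \<le> dist_L H L w y"
    unfolding dist_L_def[of H L w y] using H_ne
  proof (intro cINF_greatest)
    fix a assume a: "a \<in> H"
    have "norm (a w - x) \<le> norm (a w - y) + norm (x - y)"
      by (metis diff_add_cancel norm_triangle_ineq4 add.commute diff_diff_eq2 norm_minus_commute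
          order_trans norm_triangle_ineq)
    then have "sqrt ((L a)\<^sup>2 + (norm (a w - x))\<^sup>2) \<le> sqrt ((L a)\<^sup>2 + (norm (a w - y))\<^sup>2) + norm (x - y)"
      by (intro sqrt_lip) auto
    then show "dist_L H L w x - norm (x - y) \<le> sqrt ((L a)\<^sup>2 + (norm (a w - y))\<^sup>2)"
      using dL_le[OF a, of w x] by linarith
  qed
  then show ?thesis by linarith
qed

lemma dL_approx:
  assumes "e > 0"
  shows "\<exists>a\<in>H. L a < dist_L H L u v + e \<and> norm (a u - v) < dist_L H L u v + e"
proof -
  have "Inf ((\<lambda>a. sqrt ((L a)\<^sup>2 + (norm (a u - v))\<^sup>2)) ` H) < dist_L H L u v + e"
    using assms unfolding dist_L_def by simp
  then obtain a where a: "a \<in> H" "sqrt ((L a)\<^sup>2 + (norm (a u - v))\<^sup>2) < dist_L H L u v + e"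
    using cInf_lessD[of "(\<lambda>a. sqrt ((L a)\<^sup>2 + (norm (a u - v))\<^sup>2)) ` H"] H_ne by blast
  have "L a \<le> sqrt ((L a)\<^sup>2 + (norm (a u - v))\<^sup>2)" by simp
  moreover have "norm (a u - v) \<le> sqrt ((L a)\<^sup>2 + (norm (a u - v))\<^sup>2)"
    by (metis add.commute real_sqrt_sum_squares_ge1)
  ultimately have "L a < dist_L H L u v + e \<and> norm (a u - v) < dist_L H L u v + e"
    using a(2) by linarith
  then show ?thesis using a(1) by blast
qed

end


lemma orth_bl: "g \<in> orth \<Longrightarrow> bounded_linear g"
  unfolding orth_def
  by (auto intro!: bounded_linear_intro[of g 1] simp: linear_add linear_scale)

theorem mainTheorem14:
  fixes H :: "('a::real_normed_vector \<Rightarrow> 'a) set"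
    and L :: "nat \<Rightarrow> ('a \<Rightarrow> 'a) \<Rightarrow> real"
    and dinf :: "'a \<Rightarrow> 'a \<Rightarrow> real"
  assumes findim: "\<exists>B. finite B \<and> span B = (UNIV :: 'a set)"
    and H: "subgroup_orth H"
    and L: "\<And>i. group_norm H (L i)"
    and conv: "\<And>K. compact K \<Longrightarrow>
       uniform_limit K (\<lambda>i (u, v). dist_L H (L i) u v) (\<lambda>(u, v). dinf u v) sequentially"
    and semi: "semi_metric dinf"
  defines "G \<equiv> {g \<in> orth. \<forall>u. dinf u (g u) = 0}"
  shows "subgroup_orth G \<and> closedin (top_of_set (Blinfun ` orth)) (Blinfun ` G)
    \<and> (\<forall>u v. dinf u v = 0 \<longleftrightarrow> (\<exists>g\<in>G. v = g u))"
proof -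
  have nn: "\<And>x y. dinf x y \<ge> 0" and rf: "\<And>x. dinf x x = 0" and sy: "\<And>x y. dinf x y = dinf y x"
    and tri: "\<And>x y z. dinf x z \<le> dinf x y + dinf y z"
    using semi unfolding semi_metric_def by blast+
  have ptw: "(\<lambda>i. dist_L H (L i) u v) \<longlonglongrightarrow> dinf u v" for u v
    using tendsto_uniform_limitI[OF conv[of "{(u,v)}"], of "(u,v)"] by simp
  have dle: "dinf y x \<le> norm (y - x)" for y x
    by (rule LIMSEQ_le_const2[OF ptw]) (use dL_id[OF H L] in auto)
  have dlip: "dinf u x \<le> dinf u y + norm (x - y)" for u x y
  proof -
    have "dinf u x \<le> dinf u y + dinf y x" using tri by blast
    moreover have "dinf y x \<le> norm (x - y)" using dle[of y x] by (simp add: norm_minus_commute)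
    ultimately show ?thesis by linarith
  qed
  have oL: "linear g" and oN: "\<And>x. norm (g x) = norm x" if "g \<in> orth" for g :: "'a \<Rightarrow> 'a"
    using that unfolding orth_def by auto
  obtain B0 :: "'a set" where B0: "finite B0" "span B0 = UNIV" using findim by blast
  obtain Bs where Bs: "Bs \<subseteq> B0" "independent Bs" "B0 \<subseteq> span Bs"
    using maximal_independent_subset[of B0] by blast
  have finBs: "finite Bs" using Bs(1) B0(1) finite_subset by blast
  have spBs: "span Bs = UNIV"
    using B0(2) Bs(3) by (metis span_mono span_span top.extremum_uniqueI)
  interpret fd: finite_dimensional_vector_space "scaleR :: real \<Rightarrow> 'a \<Rightarrow> 'a" Bs
    by unfold_locales (use finBs Bs(2) spBs in \<open>auto simp: dependent_raw_def span_raw_def\<close>)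
  have injo: "inj g" if "g \<in> orth" for g :: "'a \<Rightarrow> 'a"
  proof (rule injI)
    fix x y assume "g x = g y"
    then have "g (x - y) = 0" using linear_diff[OF oL[OF that]] by simp
    then have "norm (x - y) = 0" using oN[OF that, of "x - y"] by simp
    then show "x = y" by simp
  qed
  have surjo: "surj g" if "g \<in> orth" for g :: "'a \<Rightarrow> 'a"
    using fd.linear_inj_imp_surj[of g] oL[OF that] injo[OF that]
    by (simp add: Real_Vector_Spaces.linear_def)
  have invo: "inv g \<in> orth" "\<And>x. g (inv g x) = x" "\<And>x. inv g (g x) = x" if "g \<in> orth" for g :: "'a \<Rightarrow> 'a"
  proof -
    show gi: "\<And>x. g (inv g x) = x" using surjo[OF that] by (simp add: surj_f_inv_f)
    show ig: "\<And>x. inv g (g x) = x" using injo[OF that] by (simp add: inv_f_f)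
    have "linear (inv g)"
    proof (rule linearI)
      fix x y
      have "g (inv g x + inv g y) = x + y" using linear_add[OF oL[OF that]] gi by simp
      then show "inv g (x + y) = inv g x + inv g y" by (metis ig)
    next
      fix r x
      have "g (r *\<^sub>R inv g x) = r *\<^sub>R x" using linear_scale[OF oL[OF that]] gi by simp
      then show "inv g (r *\<^sub>R x) = r *\<^sub>R inv g x" by (metis ig)
    qed
    moreover have "norm (inv g x) = norm x" for x using oN[OF that, of "inv g x"] gi by simp
    ultimately show "inv g \<in> orth" unfolding orth_def by auto
  qed
  have P1: "subgroup_orth G"
    unfolding subgroup_orth_def
  proof (intro conjI ballI)
    show "G \<subseteq> orth" unfolding G_def by auto
    show "id \<in> G" unfolding G_def orth_def by (auto simp: rf linear_id)
  next
    fix g h assume g: "g \<in> G" and h: "h \<in> G"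
    have "g \<circ> h \<in> orth" using g h unfolding G_def orth_def by (auto intro: linear_compose)
    moreover have "dinf u (g (h u)) = 0" for u
    proof -
      have "dinf u (g (h u)) \<le> dinf u (h u) + dinf (h u) (g (h u))" using tri by blast
      then show ?thesis using g h nn[of u "g (h u)"] unfolding G_def by auto
    qed
    ultimately show "g \<circ> h \<in> G" unfolding G_def by auto
  next
    fix g assume g: "g \<in> G"
    then have go: "g \<in> orth" unfolding G_def by auto
    have "dinf u (inv g u) = 0" for u
      using g invo(2)[OF go, of u] sy[of u "inv g u"] unfolding G_def by (metis (mono_tags, lifting) mem_Collect_eq)
    then show "inv g \<in> G" using invo(1)[OF go] unfolding G_def by auto
  qed
  define C where "C = {f :: 'a \<Rightarrow>\<^sub>L 'a. \<forall>u. dinf u (blinfun_apply f u) = 0}"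
  have clC: "closed C"
    unfolding closed_sequential_limits
  proof (intro allI impI)
    fix fn f assume A: "(\<forall>n. fn n \<in> C) \<and> fn \<longlonglongrightarrow> f"
    have "dinf u (blinfun_apply f u) = 0" for u
    proof -
      have t: "(\<lambda>n. blinfun_apply (fn n) u) \<longlonglongrightarrow> blinfun_apply f u"
        using A blinfun.tendsto[OF _ tendsto_const] by blast
      have t2: "(\<lambda>n. norm (blinfun_apply (fn n) u - blinfun_apply f u)) \<longlonglongrightarrow> 0"
        using t by (simp add: tendsto_norm_zero_iff LIM_zero_iff)
      have "dinf u (blinfun_apply f u) \<le> norm (blinfun_apply (fn n) u - blinfun_apply f u)" for n
        using dlip[of u "blinfun_apply f u" "blinfun_apply (fn n) u"] A
        unfolding C_def by (simp add: norm_minus_commute)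
      then have "dinf u (blinfun_apply f u) \<le> 0" by (intro LIMSEQ_le_const[OF t2]) auto
      then show ?thesis using nn by (meson order_antisym)
    qed
    then show "f \<in> C" unfolding C_def by auto
  qed
  have eqC: "Blinfun ` G = Blinfun ` orth \<inter> C"
  proof
    show "Blinfun ` G \<subseteq> Blinfun ` orth \<inter> C"
    proof
      fix f assume "f \<in> Blinfun ` G"
      then obtain g where g: "g \<in> G" "f = Blinfun g" by auto
      then have go: "g \<in> orth" unfolding G_def by auto
      have "blinfun_apply f = g" using g(2) bounded_linear_Blinfun_apply[OF orth_bl[OF go]] by simp
      then show "f \<in> Blinfun ` orth \<inter> C" using g go unfolding G_def C_def by auto
    qed
    show "Blinfun ` orth \<inter> C \<subseteq> Blinfun ` G"
    proof
      fix f assume "f \<in> Blinfun ` orth \<inter> C"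
      then obtain g where g: "g \<in> orth" "f = Blinfun g" "f \<in> C" by auto
      then have "blinfun_apply f = g" using bounded_linear_Blinfun_apply[OF orth_bl] by simp
      then have "g \<in> G" using g unfolding G_def C_def by auto
      then show "f \<in> Blinfun ` G" using g by auto
    qed
  qed
  have P2: "closedin (top_of_set (Blinfun ` orth)) (Blinfun ` G)"
    unfolding eqC by (rule closedin_closed_Int[OF clC])
  have P3: "dinf u v = 0 \<longleftrightarrow> (\<exists>g\<in>G. v = g u)" for u v
  proof
    assume "\<exists>g\<in>G. v = g u" then show "dinf u v = 0" unfolding G_def by auto
  next
    assume d0: "dinf u v = 0"
    define e where "e i = dist_L H (L i) u v + inverse (real (Suc i))" for i
    have e0: "e \<longlonglongrightarrow> 0" unfolding e_def
      using tendsto_add[OF ptw[of u v] LIMSEQ_inverse_real_of_nat] d0 by simp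
    have "\<forall>i. \<exists>a\<in>H. L i a < e i \<and> norm (a u - v) < e i"
      unfolding e_def by (intro allI dL_approx[OF H L]) simp
    then obtain a where a: "\<And>i. a i \<in> H" "\<And>i. L i (a i) < e i" "\<And>i. norm (a i u - v) < e i"
      by metis
    have aO: "a i \<in> orth" for i using a(1) H unfolding subgroup_orth_def by auto
    have Lnn: "0 \<le> L i (a i)" for i using L[of i] a(1)[of i] unfolding group_norm_def by auto
    have La: "(\<lambda>i. L i (a i)) \<longlonglongrightarrow> 0"
      by (rule tendsto_sandwich[OF _ _ tendsto_const e0]) (use Lnn a(2) in \<open>auto intro!: always_eventually less_imp_le\<close>)
    have "(\<lambda>i. norm (a i u - v)) \<longlonglongrightarrow> 0"
      by (rule tendsto_sandwich[OF _ _ tendsto_const e0]) (use a(3) in \<open>auto intro!: always_eventually less_imp_le\<close>)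
    then have au: "(\<lambda>i. a i u) \<longlonglongrightarrow> v" by (simp add: tendsto_norm_zero_iff LIM_zero_iff)
    have bwU: "\<exists>l r. strict_mono r \<and> (x \<circ> r) \<longlonglongrightarrow> l" if "bounded (range x)" for x :: "nat \<Rightarrow> 'a"
      using bw_span[OF finBs] spBs that by blast
    have bd: "bounded (range (\<lambda>i. a i b))" for b
      unfolding bounded_iff using oN[OF aO] by auto
    have "\<exists>r. strict_mono r \<and> (\<forall>b\<in>Bs. convergent (\<lambda>i. a (r i) b))"
      by (rule multi_subseq[of Bs a]) (rule finBs, rule bwU, assumption, rule bd)
    then obtain r where r: "strict_mono r" "\<forall>b\<in>Bs. convergent (\<lambda>i. a (r i) b)" by blast
    have cw: "convergent (\<lambda>i. a (r i) w)" for w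
    proof -
      have "w \<in> span Bs" using spBs by simp
      then show ?thesis
      proof (induction rule: span_induct)
        case step
        then show ?case using r(2) by auto
      next
        case base
        show ?case unfolding subspace_def
        proof (intro conjI allI impI ballI)
          show "0 \<in> Collect (\<lambda>w. convergent (\<lambda>i. a (r i) w))"
            using linear_0[OF oL[OF aO]] by (simp add: convergent_const)
        next
          fix x y assume "x \<in> Collect (\<lambda>w. convergent (\<lambda>i. a (r i) w))" "y \<in> Collect (\<lambda>w. convergent (\<lambda>i. a (r i) w))"
          then show "x + y \<in> Collect (\<lambda>w. convergent (\<lambda>i. a (r i) w))"
            using convergent_add linear_add[OF oL[OF aO]] by (simp) blast
        next
          fix c x assume "x \<in> Collect (\<lambda>w. convergent (\<lambda>i. a (r i) w))"
          then obtain l where "(\<lambda>i. a (r i) x) \<longlonglongrightarrow> l" by (auto simp: convergent_def)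
          then have "(\<lambda>i. c *\<^sub>R a (r i) x) \<longlonglongrightarrow> c *\<^sub>R l" by (intro tendsto_intros)
          then show "c *\<^sub>R x \<in> Collect (\<lambda>w. convergent (\<lambda>i. a (r i) w))"
            using linear_scale[OF oL[OF aO]] by (auto simp: convergent_def)
        qed
      qed
    qed
    define g where "g w = lim (\<lambda>i. a (r i) w)" for w
    have gl: "(\<lambda>i. a (r i) w) \<longlonglongrightarrow> g w" for w
      using cw[of w] unfolding g_def by (simp add: convergent_LIMSEQ_iff)
    have glin: "linear g"
    proof (rule linearI)
      fix x y
      have "(\<lambda>i. a (r i) (x + y)) \<longlonglongrightarrow> g x + g y"
        using tendsto_add[OF gl[of x] gl[of y]] linear_add[OF oL[OF aO]] by simp
      then show "g (x + y) = g x + g y" using gl[of "x + y"] LIMSEQ_unique by blast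
    next
      fix c x
      have "(\<lambda>i. a (r i) (c *\<^sub>R x)) \<longlonglongrightarrow> c *\<^sub>R g x"
        using tendsto_scaleR[OF tendsto_const gl[of x]] linear_scale[OF oL[OF aO]] by simp
      then show "g (c *\<^sub>R x) = c *\<^sub>R g x" using gl[of "c *\<^sub>R x"] LIMSEQ_unique by blast
    qed
    have gn: "norm (g w) = norm w" for w
    proof -
      have "(\<lambda>i. norm (a (r i) w)) \<longlonglongrightarrow> norm (g w)" using tendsto_norm[OF gl[of w]] .
      then have "(\<lambda>i. norm w) \<longlonglongrightarrow> norm (g w)" using oN[OF aO] by simp
      from LIMSEQ_unique[OF this tendsto_const] show ?thesis by simp
    qed
    have gO: "g \<in> orth" unfolding orth_def using glin gn by auto
    have gu: "g u = v"
      using LIMSEQ_unique[OF gl[of u]] LIMSEQ_subseq_LIMSEQ[OF au r(1)] by (simp add: o_def)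
    have gG: "dinf w (g w) = 0" for w
    proof -
      have up: "dist_L H (L (r i)) w (g w) \<le> L (r i) (a (r i)) + norm (g w - a (r i) w)" for i
        using dL_lip[OF H L[of "r i"], of w "g w" "a (r i) w"] dL_self[OF H L[of "r i"] a(1)[of "r i"], of w]
        by linarith
      have "(\<lambda>i. L (r i) (a (r i)) + norm (g w - a (r i) w)) \<longlonglongrightarrow> 0 + 0"
      proof (intro tendsto_add)
        show "(\<lambda>i. L (r i) (a (r i))) \<longlonglongrightarrow> 0" using LIMSEQ_subseq_LIMSEQ[OF La r(1)] by (simp add: o_def)
        show "(\<lambda>i. norm (g w - a (r i) w)) \<longlonglongrightarrow> 0"
        proof -
          have "(\<lambda>i. a (r i) w - g w) \<longlonglongrightarrow> 0" using gl[of w] by (simp add: LIM_zero_iff)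
          then have "(\<lambda>i. norm (a (r i) w - g w)) \<longlonglongrightarrow> 0" by (simp add: tendsto_norm_zero_iff)
          then show ?thesis by (simp add: norm_minus_commute)
        qed
      qed
      moreover have nn0: "\<And>i. 0 \<le> dist_L H (L (r i)) w (g w)" using dL_nonneg[OF H L] by blast
      ultimately have t1: "(\<lambda>i. dist_L H (L (r i)) w (g w)) \<longlonglongrightarrow> 0"
        using tendsto_sandwich[where f="\<lambda>i. 0" and g="\<lambda>i. dist_L H (L (r i)) w (g w)"
          and h="\<lambda>i. L (r i) (a (r i)) + norm (g w - a (r i) w)" and net=sequentially and c=0]
          up by (simp add: always_eventually)
      have t2: "(\<lambda>i. dist_L H (L (r i)) w (g w)) \<longlonglongrightarrow> dinf w (g w)"
        using LIMSEQ_subseq_LIMSEQ[OF ptw r(1)] by (simp add: o_def)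
      show ?thesis using LIMSEQ_unique[OF t2 t1] .
    qed
    show "\<exists>g\<in>G. v = g u" using gO gG gu unfolding G_def by auto
  qed
  show ?thesis by (intro conjI allI P1 P2 P3)
qed

end
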